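(* For every positive integer $n$, $$\sum_{\lambda \in \mathcal{H}_n} t^{\mathrm{rep}(\lambda)} = \sum_{\lambda \in \mathcal{H}_n} t^{\mathrm{even}(\lambda)}$$ as polynomials in $t$.
   Context: A partition is a finite nonempty weakly decreasing sequence $\lambda=(\lambda_1,\ldots,\lambda_k)$ of positive integers; $\ell(\lambda)=k$ is its number of parts. The perimeter of $\lambda$ is $\Gamma(\lambda)=\lambda_1+\ell(\lambda)-1$, and $\mathcal{H}_n$ is the (finite) set of partitions with perimeter $n$. For a partition $\lambda$, $\mathrm{rep}(\lambda)=|\{1\le i\le \ell(\lambda)-1:\lambda_i=\lambda_{i+1}\}|$ and $\mathrm{even}(\lambda)=|\{1\le i\le \ell(\lambda): \lambda_i \text{ is even}\}|$. *)

theory Defs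
  imports "HOL-Computational_Algebra.Polynomial"
begin

definition is_partition :: "nat list \<Rightarrow> bool" where
  "is_partition lam \<longleftrightarrow> lam \<noteq> [] \<and> sorted_wrt (\<ge>) lam \<and> (\<forall>x\<in>set lam. 0 < x)"

definition perimeter :: "nat list \<Rightarrow> nat" where
  "perimeter lam = hd lam + length lam - 1"

definition H :: "nat \<Rightarrow> nat list set" where
  "H n = {lam. is_partition lam \<and> perimeter lam = n}"

definition rep :: "nat list \<Rightarrow> nat" where
  "rep lam = card {i. i + 1 < length lam \<and> lam ! i = lam ! (i + 1)}"

definition even_parts :: "nat list \<Rightarrow> nat" where
  "even_parts lam = card {i. i < length lam \<and> even (lam ! i)}"

end

theory Submission
  imports Defs
begin

lemma even_parts_alt: "even_parts lam = length (filter even lam)"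
  unfolding even_parts_def by (simp add: length_filter_conv_card)

lemma rep_alt: "rep lam = length (filter (\<lambda>(x,y). x = y) (zip lam (tl lam)))"
  unfolding rep_def length_filter_conv_card
  by (rule arg_cong[where f=card]) (auto simp: nth_tl)

lemma zip_tl_snoc: "P \<noteq> [] \<Longrightarrow> zip (P @ [a]) (tl (P @ [a])) = zip P (tl P) @ [(last P, a)]"
proof (induction P)
  case Nil then show ?case by simp
next
  case (Cons x xs)
  then show ?case by (cases xs) auto
qed

lemma rep_snoc: assumes "P \<noteq> []" shows "rep (P @ [1]) = rep P + (if last P = 1 then 1 else 0)"
  unfolding rep_alt zip_tl_snoc[OF assms] by simp

lemma rep_map_Suc: "rep (map Suc P) = rep P"
  unfolding rep_alt by (induction P rule: induct_list012) auto

lemma even_snoc: "even_parts (P @ [1]) = even_parts P"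
  unfolding even_parts_alt by simp

lemma rep_snoc': "P \<noteq> [] \<Longrightarrow> rep (P @ [Suc 0]) = rep P + (if last P = Suc 0 then 1 else 0)"
  using rep_snoc by simp

lemma even_snoc': "even_parts (P @ [Suc 0]) = even_parts P"
  using even_snoc by simp

lemma even_map_Suc: "even_parts (map Suc P) = length P - even_parts P"
proof -
  have "length (filter even P) + length (filter (\<lambda>x. \<not> even x) P) = length P"
    by (rule sum_length_filter_compl)
  then show ?thesis unfolding even_parts_alt by (simp add: filter_map o_def)
qed

lemma H_mem: "lam \<in> H n \<longleftrightarrow> lam \<noteq> [] \<and> sorted_wrt (\<ge>) lam \<and> (\<forall>x\<in>set lam. 0 < x) \<and> hd lam + length lam - 1 = n"
  unfolding H_def is_partition_def perimeter_def by simp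

lemma H_one: "H (Suc 0) = {[1]}"
proof
  show "H (Suc 0) \<subseteq> {[1]}"
  proof
    fix lam assume a: "lam \<in> H (Suc 0)"
    then obtain x xs where lam: "lam = x # xs" unfolding H_mem by (cases lam) auto
    with a have "x > 0" "x + length xs = 1" unfolding H_mem by auto
    then show "lam \<in> {[1]}" using lam by (cases xs) auto
  qed
qed (simp add: H_mem)

lemma H_zero: "H 0 = {}"
  by (auto simp: H_mem neq_Nil_conv)

lemma H_nonempty: "P \<in> H n \<Longrightarrow> P \<noteq> []"
  by (simp add: H_mem)

lemma H_decomp: "H (Suc (Suc k)) = (\<lambda>P. P @ [1]) ` H (Suc k) \<union> map Suc ` H (Suc k)"
proof
  show "(\<lambda>P. P @ [1]) ` H (Suc k) \<union> map Suc ` H (Suc k) \<subseteq> H (Suc (Suc k))"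
  proof
    fix Q assume "Q \<in> (\<lambda>P. P @ [1]) ` H (Suc k) \<union> map Suc ` H (Suc k)"
    then show "Q \<in> H (Suc (Suc k))"
    proof
      assume "Q \<in> (\<lambda>P. P @ [1]) ` H (Suc k)"
      then obtain P where P: "P \<in> H (Suc k)" "Q = P @ [1]" by auto
      then show ?thesis unfolding H_mem
        by (auto simp: sorted_wrt_append Suc_le_eq)
    next
      assume "Q \<in> map Suc ` H (Suc k)"
      then obtain P where P: "P \<in> H (Suc k)" "Q = map Suc P" by auto
      then show ?thesis unfolding H_mem
        by (auto simp: sorted_wrt_map hd_map)
    qed
  qed
next
  show "H (Suc (Suc k)) \<subseteq> (\<lambda>P. P @ [1]) ` H (Suc k) \<union> map Suc ` H (Suc k)"
  proof
    fix Q assume Q: "Q \<in> H (Suc (Suc k))"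
    then have ne: "Q \<noteq> []" and so: "sorted_wrt (\<ge>) Q" and pos: "\<forall>x\<in>set Q. 0 < x"
      and per: "hd Q + length Q - 1 = Suc (Suc k)" by (auto simp: H_mem)
    show "Q \<in> (\<lambda>P. P @ [1]) ` H (Suc k) \<union> map Suc ` H (Suc k)"
    proof (cases "last Q = 1")
      case True
      define P where "P = butlast Q"
      have QP: "Q = P @ [1]" using True ne unfolding P_def by (metis append_butlast_last_id)
      have "P \<noteq> []"
      proof
        assume "P = []"
        then have "Q = [1]" using QP by simp
        then show False using per by simp
      qed
      then have "hd Q = hd P" using QP by simp
      then have "P \<in> H (Suc k)" using so pos per QP \<open>P \<noteq> []\<close>
        unfolding H_mem by (auto simp: sorted_wrt_append)
      then show ?thesis using QP by blast
    next
      case False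
      have lastpos: "last Q > 0" using pos ne by auto
      have ge2: "\<forall>x\<in>set Q. 2 \<le> x"
      proof
        fix x assume "x \<in> set Q"
        then obtain i where i: "i < length Q" "Q ! i = x" by (auto simp: in_set_conv_nth)
        have "last Q = Q ! (length Q - 1)" using ne by (simp add: last_conv_nth)
        moreover have "Q ! (length Q - 1) \<le> Q ! i"
        proof (cases "i = length Q - 1")
          case True then show ?thesis by simp
        next
          case False
          then show ?thesis using so i by (auto simp: sorted_wrt_iff_nth_less)
        qed
        ultimately show "2 \<le> x" using False lastpos i by auto
      qed
      have "hd Q \<ge> 2" using ge2 ne by auto
      then have hq: "hd Q - Suc 0 + length Q - Suc 0 = Suc k" using per by arith
      define P where "P = map (\<lambda>x. x - 1) Q"
      have QP: "Q = map Suc P" unfolding P_def using ge2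
        by (induction Q) auto
      have "P \<in> H (Suc k)" using so pos per ne ge2 unfolding H_mem P_def using hq
        by (auto simp: sorted_wrt_map hd_map intro: sorted_wrt_mono_rel[OF _ so])
      then show ?thesis using QP by blast
    qed
  qed
qed

lemma H_finite: "finite (H n)"
proof (induction n rule: nat_less_induct)
  case (1 n)
  show ?case
  proof (cases n)
    case 0 then show ?thesis by (simp add: H_zero)
  next
    case (Suc m)
    then show ?thesis
    proof (cases m)
      case 0 then show ?thesis using Suc by (simp add: H_one)
    next
      case (Suc k)
      then show ?thesis using 1 \<open>n = Suc m\<close> by (simp add: H_decomp)
    qed
  qed
qed

lemma H_last: "P \<in> H n \<Longrightarrow> last (map Suc P) \<noteq> 1"
  by (auto simp: H_mem last_map)

lemma sum_H_decomp:
  "(\<Sum>P\<in>H (Suc (Suc k)). f P) = (\<Sum>P\<in>H (Suc k). f (P @ [1])) + (\<Sum>P\<in>H (Suc k). f (map Suc P))"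
proof -
  have disj: "(\<lambda>P. P @ [1]) ` H (Suc k) \<inter> map Suc ` H (Suc k) = {}"
  proof -
    have "\<And>P Q. P \<in> H (Suc k) \<Longrightarrow> Q \<in> H (Suc k) \<Longrightarrow> P @ [1] \<noteq> map Suc Q"
      using H_last by (metis last_snoc)
    then show ?thesis by blast
  qed
  have i1: "inj_on (\<lambda>P. P @ [1]) (H (Suc k))" by (auto intro: inj_onI)
  have i2: "inj_on (map Suc) (H (Suc k))" by (auto intro: inj_onI simp: inj_map_eq_map)
  show ?thesis
    unfolding H_decomp
    by (simp only: sum.union_disjoint[OF finite_imageI[OF H_finite] finite_imageI[OF H_finite] disj]
        sum.reindex[OF i1] sum.reindex[OF i2] o_def)
qed

fun r :: "nat \<Rightarrow> int poly \<times> int poly" where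
  "r 0 = (1, 0)"
| "r (Suc k) = (monom 1 1 * fst (r k) + snd (r k), fst (r k) + snd (r k))"

lemma monom_split: "monom (1::int) m = (if c then monom 1 m else 0) + (if \<not> c then monom 1 m else 0)"
  by simp

lemma rep_side:
  "(\<Sum>P\<in>H (Suc k). if last P = 1 then monom (1::int) (rep P) else 0) = fst (r k) \<and>
   (\<Sum>P\<in>H (Suc k). if last P \<noteq> 1 then monom (1::int) (rep P) else 0) = snd (r k)"
proof (induction k)
  case 0 then show ?case by (simp add: H_one rep_alt)
next
  case (Suc k)
  let ?A = "\<Sum>P\<in>H (Suc k). if last P = 1 then monom (1::int) (rep P) else 0"
  let ?B = "\<Sum>P\<in>H (Suc k). if last P \<noteq> 1 then monom (1::int) (rep P) else 0"
  have s1: "(\<Sum>P\<in>H (Suc k). monom (1::int) (rep (P @ [1]))) = monom 1 1 * ?A + ?B"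
  proof -
    have "(\<Sum>P\<in>H (Suc k). monom (1::int) (rep (P @ [1]))) =
      (\<Sum>P\<in>H (Suc k). monom 1 1 * (if last P = 1 then monom (1::int) (rep P) else 0)
         + (if last P \<noteq> 1 then monom (1::int) (rep P) else 0))"
      by (rule sum.cong) (auto simp: rep_snoc'[OF H_nonempty] mult_monom)
    then show ?thesis by (simp add: sum.distrib sum_distrib_left)
  qed
  have s2: "(\<Sum>P\<in>H (Suc k). monom (1::int) (rep (map Suc P))) = ?A + ?B"
  proof -
    have "(\<Sum>P\<in>H (Suc k). monom (1::int) (rep (map Suc P))) =
      (\<Sum>P\<in>H (Suc k). (if last P = 1 then monom (1::int) (rep P) else 0)
         + (if last P \<noteq> 1 then monom (1::int) (rep P) else 0))"
      by (rule sum.cong) (auto simp: rep_map_Suc)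
    then show ?thesis by (simp add: sum.distrib)
  qed
  have l1: "\<And>P. P \<in> H (Suc k) \<Longrightarrow> last (map Suc P) \<noteq> 1"
    by (rule H_last)
  have "(\<Sum>P\<in>H (Suc (Suc k)). if last P = 1 then monom (1::int) (rep P) else 0) = monom 1 1 * ?A + ?B"
    unfolding sum_H_decomp using s1 l1 by simp
  moreover have "(\<Sum>P\<in>H (Suc (Suc k)). if last P \<noteq> 1 then monom (1::int) (rep P) else 0) = ?A + ?B"
    unfolding sum_H_decomp using s2 l1 by simp
  ultimately show ?case using Suc by simp
qed

lemma even_side:
  "(\<Sum>P\<in>H (Suc k). monom (1::int) (length P - even_parts P)) = fst (r (Suc k)) \<and>
   (\<Sum>P\<in>H (Suc k). monom (1::int) (even_parts P)) = snd (r (Suc k))"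
proof (induction k)
  case 0 then show ?case by (simp add: H_one even_parts_alt)
next
  case (Suc k)
  have ev_le: "\<And>P. even_parts P \<le> length P"
    unfolding even_parts_alt by simp
  have a1: "(\<Sum>P\<in>H (Suc k). monom (1::int) (length (P @ [1]) - even_parts (P @ [1])))
     = monom 1 1 * (\<Sum>P\<in>H (Suc k). monom (1::int) (length P - even_parts P))"
    unfolding sum_distrib_left
    by (rule sum.cong) (simp_all add: even_snoc' mult_monom Suc_diff_le ev_le)
  have a2: "(\<Sum>P\<in>H (Suc k). monom (1::int) (length (map Suc P) - even_parts (map Suc P)))
     = (\<Sum>P\<in>H (Suc k). monom (1::int) (even_parts P))"
    by (rule sum.cong) (auto simp: even_map_Suc diff_diff_cancel[OF ev_le])
  have b1: "(\<Sum>P\<in>H (Suc k). monom (1::int) (even_parts (P @ [1])))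
     = (\<Sum>P\<in>H (Suc k). monom (1::int) (even_parts P))"
    by (simp add: even_snoc')
  have b2: "(\<Sum>P\<in>H (Suc k). monom (1::int) (even_parts (map Suc P)))
     = (\<Sum>P\<in>H (Suc k). monom (1::int) (length P - even_parts P))"
    by (simp add: even_map_Suc)
  show ?case
    apply (subst (1 2) sum_H_decomp)
    unfolding a1 a2 b1 b2 using Suc
    by (simp only: r.simps fst_conv snd_conv) (simp add: add.commute)
qed

theorem theorem1p3:
  fixes n :: nat
  assumes "0 < n"
  shows "(\<Sum>lam\<in>H n. monom (1::int) (rep lam)) = (\<Sum>lam\<in>H n. monom (1::int) (even_parts lam))"
proof -
  obtain k where n: "n = Suc k" using assms by (cases n) auto
  have "(\<Sum>lam\<in>H n. monom (1::int) (rep lam)) =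
     (\<Sum>P\<in>H (Suc k). (if last P = 1 then monom (1::int) (rep P) else 0)
         + (if last P \<noteq> 1 then monom (1::int) (rep P) else 0))"
    unfolding n by (rule sum.cong) auto
  also have "\<dots> = fst (r k) + snd (r k)"
    using rep_side[of k] by (simp add: sum.distrib)
  also have "\<dots> = snd (r (Suc k))" by simp
  also have "\<dots> = (\<Sum>lam\<in>H n. monom (1::int) (even_parts lam))"
    using even_side[of k] n by simp
  finally show ?thesis .
qed

end
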